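(* Let $0<c<b<a$ and let $\omega$ be the frequency map of the billiard inside $Q=\{x^2/a+y^2/b+z^2/c=1\}$. Let $\kappa^G=(\kappa^G_1,\kappa^G_2):(c,b)\cup(b,a)\to\mathbb{R}_+^2$ be the function such that $\omega(\lambda_1,\lambda_2)=\kappa^G(\lambda_2)\lambda_1^{1/2}+O(\lambda_1^{3/2})$ as $\lambda_1\to0^+$. For $\lambda\in(c,b)\cup(b,a)$ let $T^G(s)=-s(\lambda-s)(c-s)(b-s)(a-s)$ and $\rho^G(\lambda)=\dfrac{\int_c^{\min(b,\lambda)}s\,ds/\sqrt{T^G(s)}}{\int_{\max(b,\lambda)}^a s\,ds/\sqrt{T^G(s)}}$. Then $\rho^G=\kappa^G_2/\kappa^G_1$. Thus $\omega_2(\lambda_1,\lambda_2)/\omega_1(\lambda_1,\lambda_2)=\rho^G(\lambda_2)+O(\lambda_1)$ as $\lambda_1\to0^+$.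
   Context: Frequency map: for $\lambda_1\in(0,c)$ and $\lambda_2\in(c,b)\cup(b,a)$, order $\{a,b,c,\lambda_1,\lambda_2\}=\{c_1<\dots<c_5\}$, $c_0=0$, $T(s)=\prod_{k=1}^5(c_k-s)$, $K_{ij}=\int_{c_{2j}}^{c_{2j+1}}s^i ds/\sqrt{T(s)}$ ($i=0,1$, $j=0,1,2$), $K_j=(K_{0j},K_{1j})^t$; $\omega(\lambda_1,\lambda_2)$ is the unique solution of $K_0-2\omega_1K_1+2\omega_2K_2=0$. $\rho^G$ is the rotation number of geodesics on $Q$ oscillating between the curvature lines $Q\cap Q_\lambda$. *)

theory Defs
  imports "HOL-Analysis.Analysis" "HOL-Library.Landau_Symbols"
begin

definition freq_nodes :: "real \<Rightarrow> real \<Rightarrow> real \<Rightarrow> real \<Rightarrow> real \<Rightarrow> real list" where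
  "freq_nodes a b c l1 l2 = 0 # sort [a, b, c, l1, l2]"

definition freq_T :: "real \<Rightarrow> real \<Rightarrow> real \<Rightarrow> real \<Rightarrow> real \<Rightarrow> real \<Rightarrow> real" where
  "freq_T a b c l1 l2 s = (\<Prod>k\<in>{1..5::nat}. (freq_nodes a b c l1 l2 ! k - s))"

definition freq_K :: "real \<Rightarrow> real \<Rightarrow> real \<Rightarrow> real \<Rightarrow> real \<Rightarrow> nat \<Rightarrow> real \<times> real" where
  "freq_K a b c l1 l2 j =
     (let cs = freq_nodes a b c l1 l2; T = freq_T a b c l1 l2 in
      (integral {cs ! (2*j) .. cs ! (2*j+1)} (\<lambda>s. s ^ 0 / sqrt (T s)),
       integral {cs ! (2*j) .. cs ! (2*j+1)} (\<lambda>s. s ^ 1 / sqrt (T s))))"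

definition freq_map :: "real \<Rightarrow> real \<Rightarrow> real \<Rightarrow> real \<Rightarrow> real \<Rightarrow> real \<times> real" where
  "freq_map a b c l1 l2 =
     (THE w. freq_K a b c l1 l2 0 - (2 * fst w) *\<^sub>R freq_K a b c l1 l2 1
             + (2 * snd w) *\<^sub>R freq_K a b c l1 l2 2 = 0)"

definition TG :: "real \<Rightarrow> real \<Rightarrow> real \<Rightarrow> real \<Rightarrow> real \<Rightarrow> real" where
  "TG a b c l s = - s * (l - s) * (c - s) * (b - s) * (a - s)"

definition rhoG :: "real \<Rightarrow> real \<Rightarrow> real \<Rightarrow> real \<Rightarrow> real" where
  "rhoG a b c l =
     integral {c .. min b l} (\<lambda>s. s / sqrt (TG a b c l s)) /
     integral {max b l .. a} (\<lambda>s. s / sqrt (TG a b c l s))"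

end

theory Submission
  imports Defs
begin



lemma inv_sqrt_left_has_integral:
  fixes \<alpha> \<beta> :: real assumes "\<alpha> < \<beta>"
  shows "((\<lambda>s. 1 / sqrt (s - \<alpha>)) has_integral (2 * sqrt (\<beta> - \<alpha>))) {\<alpha>..\<beta>}"
proof -
  have "((\<lambda>s. 1 / sqrt (s - \<alpha>)) has_integral (2 * sqrt (\<beta> - \<alpha>) - 2 * sqrt (\<alpha> - \<alpha>))) {\<alpha>..\<beta>}"
  proof (rule fundamental_theorem_of_calculus_interior)
    show "continuous_on {\<alpha>..\<beta>} (\<lambda>s. 2 * sqrt (s - \<alpha>))" by (intro continuous_intros)
    fix x assume x: "x \<in> {\<alpha><..<\<beta>}"
    show "((\<lambda>s. 2 * sqrt (s - \<alpha>)) has_vector_derivative 1 / sqrt (x - \<alpha>)) (at x)"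
      unfolding has_real_derivative_iff_has_vector_derivative[symmetric]
      using x by (auto intro!: derivative_eq_intros simp: field_simps)
  qed (use assms in auto)
  then show ?thesis by simp
qed

lemma inv_sqrt_right_has_integral:
  fixes \<alpha> \<beta> :: real assumes "\<alpha> < \<beta>"
  shows "((\<lambda>s. 1 / sqrt (\<beta> - s)) has_integral (2 * sqrt (\<beta> - \<alpha>))) {\<alpha>..\<beta>}"
proof -
  have "((\<lambda>s. 1 / sqrt (\<beta> - s)) has_integral (- 2 * sqrt (\<beta> - \<beta>) - (- 2 * sqrt (\<beta> - \<alpha>)))) {\<alpha>..\<beta>}"
  proof (rule fundamental_theorem_of_calculus_interior)
    show "continuous_on {\<alpha>..\<beta>} (\<lambda>s. - 2 * sqrt (\<beta> - s))" by (intro continuous_intros)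
    fix x assume x: "x \<in> {\<alpha><..<\<beta>}"
    show "((\<lambda>s. - 2 * sqrt (\<beta> - s)) has_vector_derivative 1 / sqrt (\<beta> - x)) (at x)"
      unfolding has_real_derivative_iff_has_vector_derivative[symmetric]
      using x by (auto intro!: derivative_eq_intros simp: field_simps)
  qed (use assms in auto)
  then show ?thesis by simp
qed

lemma maj_has_integral:
  fixes \<alpha> \<beta> B :: real assumes "\<alpha> < \<beta>"
  shows "((\<lambda>s. B * (1 / sqrt (s - \<alpha>) + 1 / sqrt (\<beta> - s))) has_integral (B * (4 * sqrt (\<beta> - \<alpha>)))) {\<alpha>..\<beta>}"
  using has_integral_mult_right[OF has_integral_add[OF inv_sqrt_left_has_integral[OF assms] inv_sqrt_right_has_integral[OF assms]], of B]
  by simp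

lemma sing_integrable:
  fixes \<alpha> \<beta> B :: real and f :: "real \<Rightarrow> real"
  assumes ab: "\<alpha> < \<beta>" and cont: "continuous_on {\<alpha><..<\<beta>} f"
    and bd: "\<And>s. s \<in> {\<alpha><..<\<beta>} \<Longrightarrow> \<bar>f s\<bar> \<le> B * (1 / sqrt (s - \<alpha>) + 1 / sqrt (\<beta> - s))"
  shows "f integrable_on {\<alpha>..\<beta>}"
proof -
  have "(\<lambda>s. B * (1 / sqrt (s - \<alpha>) + 1 / sqrt (\<beta> - s))) integrable_on {\<alpha><..<\<beta>}"
    using maj_has_integral[OF ab, of B] integrable_on_open_interval_real by blast
  then have "f integrable_on {\<alpha><..<\<beta>}"
    using measurable_bounded_by_integrable_imp_integrable[OF continuous_imp_measurable_on_sets_lebesgue[OF cont]] bd by auto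
  then show ?thesis using integrable_on_open_interval_real by blast
qed

lemma inv_sqrt_prod_bound:
  fixes x y L :: real assumes "x > 0" "y > 0" "x + y = L"
  shows "1 / sqrt (x * y) \<le> sqrt (2 / L) * (1 / sqrt x + 1 / sqrt y)"
proof -
  have L: "L > 0" using assms by simp
  { fix u v :: real assume u: "u > 0" "v > 0" "u \<le> v" "u + v = L"
    have "v \<ge> L / 2" using u by simp
    hence "sqrt (L/2) \<le> sqrt v" by simp
    hence "1 / sqrt v \<le> 1 / sqrt (L/2)" using L by (intro divide_left_mono) auto
    also have "1 / sqrt (L/2) = sqrt (2 / L)" by (simp add: real_sqrt_divide)
    finally have v: "1 / sqrt v \<le> sqrt (2/L)" .
    have "1 / sqrt (u * v) = (1 / sqrt u) * (1 / sqrt v)" by (simp add: real_sqrt_mult)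
    also have "\<dots> \<le> (1 / sqrt u) * sqrt (2/L)" using v u by (intro mult_left_mono) auto
    also have "\<dots> \<le> sqrt (2 / L) * (1 / sqrt u + 1 / sqrt v)" using u by (simp add: algebra_simps)
    finally have "1 / sqrt (u * v) \<le> sqrt (2 / L) * (1 / sqrt u + 1 / sqrt v)" .
  } note * = this
  show ?thesis
  proof (cases "x \<le> y")
    case True then show ?thesis using *[of x y] assms by simp
  next
    case False then show ?thesis using *[of y x] assms by (simp add: mult.commute add.commute)
  qed
qed




lemma bound_from_q:
  fixes \<alpha> \<beta> k q h H s :: real
  assumes ab: "\<alpha> < \<beta>" and s: "s \<in> {\<alpha><..<\<beta>}" and q: "q \<ge> k * ((s - \<alpha>) * (\<beta> - s))"
    and k: "k > 0" and h: "\<bar>h\<bar> \<le> H"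
  shows "\<bar>h / sqrt q\<bar> \<le> (H / sqrt k * sqrt (2 / (\<beta> - \<alpha>))) * (1 / sqrt (s - \<alpha>) + 1 / sqrt (\<beta> - s))"
proof -
  have x: "s - \<alpha> > 0" "\<beta> - s > 0" using s by auto
  have p: "(s - \<alpha>) * (\<beta> - s) > 0" using x by simp
  have sq: "sqrt q \<ge> sqrt k * sqrt ((s - \<alpha>) * (\<beta> - s))"
    using q by (simp add: real_sqrt_mult[symmetric])
  have pos: "sqrt k * sqrt ((s - \<alpha>) * (\<beta> - s)) > 0" using k p by simp
  have sqp: "sqrt q > 0" using sq pos by linarith
  have "\<bar>h / sqrt q\<bar> = \<bar>h\<bar> / sqrt q" using sqp by (simp add: abs_divide)
  also have "\<dots> \<le> H / (sqrt k * sqrt ((s - \<alpha>) * (\<beta> - s)))"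
    using h sq pos by (intro frac_le) auto
  also have "\<dots> = H / sqrt k * (1 / sqrt ((s - \<alpha>) * (\<beta> - s)))" by simp
  also have "\<dots> \<le> H / sqrt k * (sqrt (2 / (\<beta> - \<alpha>)) * (1 / sqrt (s - \<alpha>) + 1 / sqrt (\<beta> - s)))"
    using h by (intro mult_left_mono inv_sqrt_prod_bound) (use x k in auto)
  finally show ?thesis by (simp add: mult_ac)
qed



lemma sqrt_ratio_bound:
  fixes s e \<alpha> :: real
  assumes "0 < \<alpha>" "\<alpha> \<le> s" "0 \<le> e" "e \<le> \<alpha> / 2"
  shows "1 \<le> sqrt s / sqrt (s - e)" "sqrt s / sqrt (s - e) \<le> 1 + e / (sqrt \<alpha> * sqrt (\<alpha> / 2))"
proof -
  define x y where "x = sqrt (s - e)" and "y = sqrt s"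
  have x0: "x \<ge> sqrt (\<alpha>/2)" using assms unfolding x_def by simp
  have y0: "y \<ge> sqrt \<alpha>" using assms unfolding y_def by simp
  have "sqrt (\<alpha>/2) > 0" "sqrt \<alpha> > 0" using assms by auto
  hence xp: "x > 0" and yp: "y > 0" using x0 y0 by linarith+
  have xy: "x \<le> y" using assms unfolding x_def y_def by simp
  show "1 \<le> sqrt s / sqrt (s - e)" using xy xp by (simp add: x_def[symmetric] y_def[symmetric])
  have sq: "y^2 - x^2 = e" using assms unfolding x_def y_def by simp
  have "(y - x) * (y + x) = e" using sq by (simp add: power2_eq_square algebra_simps)
  hence "y - x = e / (y + x)" using xp yp by (simp add: field_simps)
  also have "\<dots> \<le> e / y" using assms xp yp by (intro divide_left_mono) auto
  finally have d: "y - x \<le> e / y" .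
  have "y / x = 1 + (y - x) / x" using xp by (simp add: field_simps)
  also have "\<dots> \<le> 1 + (e / y) / x" using divide_right_mono[OF d, of x] xp by simp
  also have "(e / y) / x = e / (x * y)" by simp
  also have "\<dots> \<le> e / (sqrt \<alpha> * sqrt (\<alpha> / 2))"
  proof -
    have m: "sqrt (\<alpha>/2) * sqrt \<alpha> \<le> x * y" using x0 y0 xp yp assms by (intro mult_mono) auto
    have "0 < sqrt \<alpha> * sqrt (\<alpha> / 2)" using assms by simp
    then show ?thesis using m assms xp yp by (intro divide_left_mono) (auto simp: mult.commute)
  qed
  finally show "sqrt s / sqrt (s - e) \<le> 1 + e / (sqrt \<alpha> * sqrt (\<alpha> / 2))"
    by (simp add: x_def y_def)
qed


lemma interval_facts:
  fixes \<alpha> \<beta> E k M :: real and G :: "real \<Rightarrow> real \<Rightarrow> real" and e :: real and i :: nat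
  assumes ab: "0 < \<alpha>" "\<alpha> < \<beta>" and E: "E \<le> \<alpha> / 2" and k: "k > 0" and M: "M > 0"
    and low: "\<And>e s. 0 \<le> e \<Longrightarrow> e \<le> E \<Longrightarrow> s \<in> {\<alpha><..<\<beta>} \<Longrightarrow> k * ((s - \<alpha>) * (\<beta> - s)) \<le> G e s"
    and up: "\<And>e s. 0 \<le> e \<Longrightarrow> e \<le> E \<Longrightarrow> s \<in> {\<alpha><..<\<beta>} \<Longrightarrow> G e s \<le> M"
    and ratio: "\<And>e s. s > 0 \<Longrightarrow> G e s = (s - e) / s * G 0 s"
    and cont: "\<And>e. continuous_on {\<alpha><..<\<beta>} (G e)"
    and e: "0 \<le> e" "e \<le> E"
  shows "(\<lambda>s. s ^ i / sqrt (G e s)) integrable_on {\<alpha>..\<beta>}"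
    and "integral {\<alpha>..\<beta>} (\<lambda>s. s ^ 0 / sqrt (G e s)) > 0"
    and "\<alpha> * integral {\<alpha>..\<beta>} (\<lambda>s. s ^ 0 / sqrt (G e s)) \<le> integral {\<alpha>..\<beta>} (\<lambda>s. s ^ 1 / sqrt (G e s))"
    and "integral {\<alpha>..\<beta>} (\<lambda>s. s ^ 1 / sqrt (G e s)) \<le> \<beta> * integral {\<alpha>..\<beta>} (\<lambda>s. s ^ 0 / sqrt (G e s))"
    and "\<bar>integral {\<alpha>..\<beta>} (\<lambda>s. s ^ i / sqrt (G e s)) - integral {\<alpha>..\<beta>} (\<lambda>s. s ^ i / sqrt (G 0 s))\<bar>
           \<le> e * (1 / (sqrt \<alpha> * sqrt (\<alpha> / 2))) * integral {\<alpha>..\<beta>} (\<lambda>s. s ^ i / sqrt (G 0 s))"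
proof -
  have Gpos: "G e' s > 0" if "0 \<le> e'" "e' \<le> E" "s \<in> {\<alpha><..<\<beta>}" for e' s
  proof -
    have "k * ((s - \<alpha>) * (\<beta> - s)) > 0" using that k by auto
    then show ?thesis using low[OF that] by linarith
  qed
  have int: "(\<lambda>s. s ^ j / sqrt (G e' s)) integrable_on {\<alpha>..\<beta>}" if "0 \<le> e'" "e' \<le> E" for e' j
  proof (rule sing_integrable[OF ab(2)])
    show "continuous_on {\<alpha><..<\<beta>} (\<lambda>s. s ^ j / sqrt (G e' s))"
      using Gpos[OF that] by (intro continuous_intros cont) (auto, fastforce)
    fix s assume s: "s \<in> {\<alpha><..<\<beta>}"
    have "\<bar>s ^ j\<bar> \<le> \<beta> ^ j" using s ab by (auto intro!: power_mono)
    then show "\<bar>s ^ j / sqrt (G e' s)\<bar> \<le> (\<beta> ^ j / sqrt k * sqrt (2 / (\<beta> - \<alpha>))) * (1 / sqrt (s - \<alpha>) + 1 / sqrt (\<beta> - s))"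
      by (intro bound_from_q[OF ab(2) s low[OF that s] k])
  qed
  show "(\<lambda>s. s ^ i / sqrt (G e s)) integrable_on {\<alpha>..\<beta>}" using int e by blast
  have io: "(\<lambda>s. s ^ j / sqrt (G e' s)) integrable_on {\<alpha><..<\<beta>}" if "0 \<le> e'" "e' \<le> E" for e' j
    using int[OF that] integrable_on_open_interval_real by blast
  note ie = integral_open_interval_real
  have "integral {\<alpha><..<\<beta>} (\<lambda>s. 1 / sqrt M) \<le> integral {\<alpha><..<\<beta>} (\<lambda>s. s ^ 0 / sqrt (G e s))"
  proof (rule integral_le)
    show "(\<lambda>s. 1 / sqrt M) integrable_on {\<alpha><..<\<beta>}" using integrable_on_open_interval_real by blast
    show "(\<lambda>s. s ^ 0 / sqrt (G e s)) integrable_on {\<alpha><..<\<beta>}" using io e by blast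
    fix s assume s: "s \<in> {\<alpha><..<\<beta>}"
    show "1 / sqrt M \<le> s ^ 0 / sqrt (G e s)"
      using Gpos[OF e s] up[OF e s] by (simp add: frac_le)
  qed
  moreover have "integral {\<alpha><..<\<beta>} (\<lambda>s. 1 / sqrt M) = (\<beta> - \<alpha>) * (1 / sqrt M)"
    using ie[of \<alpha> \<beta> "\<lambda>s. 1 / sqrt M", symmetric] ab by simp
  moreover have "(\<beta> - \<alpha>) * (1 / sqrt M) > 0" using ab M by simp
  ultimately have "integral {\<alpha><..<\<beta>} (\<lambda>s. s ^ 0 / sqrt (G e s)) > 0" by linarith
  then show "integral {\<alpha>..\<beta>} (\<lambda>s. s ^ 0 / sqrt (G e s)) > 0" by (simp only: ie)
  have "integral {\<alpha><..<\<beta>} (\<lambda>s. \<alpha> * (s ^ 0 / sqrt (G e s))) \<le> integral {\<alpha><..<\<beta>} (\<lambda>s. s ^ 1 / sqrt (G e s))"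
  proof (rule integral_le)
    show "(\<lambda>s. \<alpha> * (s ^ 0 / sqrt (G e s))) integrable_on {\<alpha><..<\<beta>}" using io[OF e, of 0] using integrable_cmul by force
    show "(\<lambda>s. s ^ 1 / sqrt (G e s)) integrable_on {\<alpha><..<\<beta>}" using io e by blast
    fix s assume s: "s \<in> {\<alpha><..<\<beta>}"
    show "\<alpha> * (s ^ 0 / sqrt (G e s)) \<le> s ^ 1 / sqrt (G e s)"
      using Gpos[OF e s] s by (simp add: divide_right_mono)
  qed
  then show "\<alpha> * integral {\<alpha>..\<beta>} (\<lambda>s. s ^ 0 / sqrt (G e s)) \<le> integral {\<alpha>..\<beta>} (\<lambda>s. s ^ 1 / sqrt (G e s))"
    by (simp only: ie integral_mult[OF io[OF e, of 0]])
  have "integral {\<alpha><..<\<beta>} (\<lambda>s. s ^ 1 / sqrt (G e s)) \<le> integral {\<alpha><..<\<beta>} (\<lambda>s. \<beta> * (s ^ 0 / sqrt (G e s)))"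
  proof (rule integral_le)
    show "(\<lambda>s. \<beta> * (s ^ 0 / sqrt (G e s))) integrable_on {\<alpha><..<\<beta>}" using io[OF e, of 0] using integrable_cmul by force
    show "(\<lambda>s. s ^ 1 / sqrt (G e s)) integrable_on {\<alpha><..<\<beta>}" using io e by blast
    fix s assume s: "s \<in> {\<alpha><..<\<beta>}"
    show "s ^ 1 / sqrt (G e s) \<le> \<beta> * (s ^ 0 / sqrt (G e s))"
      using Gpos[OF e s] s by (simp add: divide_right_mono)
  qed
  then show "integral {\<alpha>..\<beta>} (\<lambda>s. s ^ 1 / sqrt (G e s)) \<le> \<beta> * integral {\<alpha>..\<beta>} (\<lambda>s. s ^ 0 / sqrt (G e s))"
    by (simp only: ie integral_mult[OF io[OF e, of 0]])
  define D where "D = 1 / (sqrt \<alpha> * sqrt (\<alpha> / 2))"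
  have e0: "0 \<le> (0::real)" "0 \<le> E" using e by auto
  have "norm (integral {\<alpha><..<\<beta>} (\<lambda>s. s ^ i / sqrt (G e s) - s ^ i / sqrt (G 0 s)))
        \<le> integral {\<alpha><..<\<beta>} (\<lambda>s. e * D * (s ^ i / sqrt (G 0 s)))"
  proof (rule integral_norm_bound_integral)
    show "(\<lambda>s. s ^ i / sqrt (G e s) - s ^ i / sqrt (G 0 s)) integrable_on {\<alpha><..<\<beta>}"
      using io[OF e] io[OF e0] by (rule integrable_diff)
    show "(\<lambda>s. e * D * (s ^ i / sqrt (G 0 s))) integrable_on {\<alpha><..<\<beta>}"
      using io[OF e0, of i] using integrable_cmul by force
    fix s assume s: "s \<in> {\<alpha><..<\<beta>}"
    have sp: "s > 0" "s - e > 0" using s ab e E by auto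
    have g0: "G 0 s > 0" using Gpos[OF e0 s] .
    have "sqrt (G e s) = sqrt (s - e) / sqrt s * sqrt (G 0 s)"
      using ratio[OF sp(1), of e] by (simp add: real_sqrt_mult real_sqrt_divide)
    hence eq: "s ^ i / sqrt (G e s) = (s ^ i / sqrt (G 0 s)) * (sqrt s / sqrt (s - e))"
      using sp g0 Gpos[OF e s] by (simp add: field_simps)
    have f0: "s ^ i / sqrt (G 0 s) \<ge> 0" using sp g0 by simp
    have r: "1 \<le> sqrt s / sqrt (s - e)" "sqrt s / sqrt (s - e) \<le> 1 + e * D"
      using sqrt_ratio_bound[of \<alpha> s e] ab s e E unfolding D_def by auto
    have "s ^ i / sqrt (G e s) - s ^ i / sqrt (G 0 s) = (s ^ i / sqrt (G 0 s)) * (sqrt s / sqrt (s - e) - 1)"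
      by (simp add: eq algebra_simps)
    moreover have "0 \<le> (s ^ i / sqrt (G 0 s)) * (sqrt s / sqrt (s - e) - 1)" using f0 r by (intro mult_nonneg_nonneg) auto
    moreover have "(s ^ i / sqrt (G 0 s)) * (sqrt s / sqrt (s - e) - 1) \<le> (s ^ i / sqrt (G 0 s)) * (e * D)"
      using f0 r by (intro mult_left_mono) auto
    ultimately show "norm (s ^ i / sqrt (G e s) - s ^ i / sqrt (G 0 s)) \<le> e * D * (s ^ i / sqrt (G 0 s))"
      by (simp add: mult_ac)
  qed
  moreover have "integral {\<alpha><..<\<beta>} (\<lambda>s. s ^ i / sqrt (G e s) - s ^ i / sqrt (G 0 s))
     = integral {\<alpha><..<\<beta>} (\<lambda>s. s ^ i / sqrt (G e s)) - integral {\<alpha><..<\<beta>} (\<lambda>s. s ^ i / sqrt (G 0 s))"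
    using io[OF e] io[OF e0] by (rule integral_diff)
  ultimately show "\<bar>integral {\<alpha>..\<beta>} (\<lambda>s. s ^ i / sqrt (G e s)) - integral {\<alpha>..\<beta>} (\<lambda>s. s ^ i / sqrt (G 0 s))\<bar>
           \<le> e * (1 / (sqrt \<alpha> * sqrt (\<alpha> / 2))) * integral {\<alpha>..\<beta>} (\<lambda>s. s ^ i / sqrt (G 0 s))"
    by (simp only: ie integral_mult[OF io[OF e0, of i]] D_def real_norm_def)
qed




lemma prod4_ge:
  fixes m y x1 x2 x3 x4 :: real
  assumes "0 \<le> m" "0 \<le> y" "m \<le> x1" "m \<le> x2" "m \<le> x3" "m \<le> x4"
  shows "m^4 * y \<le> y * x1 * x2 * x3 * x4"
proof -
  have "m * m \<le> x1 * x2" using assms by (intro mult_mono) auto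
  moreover have "m * m \<le> x3 * x4" using assms by (intro mult_mono) auto
  ultimately have "(m * m) * (m * m) \<le> (x1 * x2) * (x3 * x4)" using assms by (intro mult_mono) auto
  hence "y * ((m * m) * (m * m)) \<le> y * ((x1 * x2) * (x3 * x4))" using assms by (intro mult_left_mono) auto
  thus ?thesis by (simp add: power4_eq_xxxx mult_ac)
qed

lemma K01_bound:
  fixes a c c3 c4 e :: real
  assumes o: "0 < c" "c < c3" "c3 < c4" "c4 < a" and e: "0 < e" "e \<le> c / 2"
  shows "\<bar>integral {0..e} (\<lambda>s. s ^ 1 / sqrt ((e - s) * (c - s) * (c3 - s) * (c4 - s) * (a - s)))\<bar>
         \<le> (e / (c/2)^2) * (4 * sqrt e)"
proof -
  define G where "G s = (e - s) * (c - s) * (c3 - s) * (c4 - s) * (a - s)" for s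
  define B where "B = e / (c/2)^2"
  have low: "(c/2)^4 * (e - s) \<le> G s" if s: "s \<in> {0<..<e}" for s
    unfolding G_def using s o e by (intro prod4_ge) auto
  have bd: "\<bar>s ^ 1 / sqrt (G s)\<bar> \<le> B * (1 / sqrt (s - 0) + 1 / sqrt (e - s))" if s: "s \<in> {0<..<e}" for s
  proof -
    have es: "e - s > 0" using s by simp
    have sq: "sqrt (G s) \<ge> (c/2)^2 * sqrt (e - s)"
    proof -
      have h: "(c/2)^4 = ((c/2)^2)^2" by (simp flip: power_mult)
      have "sqrt ((c/2)^4 * (e-s)) = (c/2)^2 * sqrt (e-s)" unfolding h real_sqrt_mult real_sqrt_abs by simp
      then show ?thesis using real_sqrt_le_mono[OF low[OF s]] by simp
    qed
    have p: "(c/2)^2 * sqrt (e - s) > 0" using o es by simp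
    have "\<bar>s ^ 1 / sqrt (G s)\<bar> = s / sqrt (G s)" using s sq p by (simp add: abs_divide)
    also have "\<dots> \<le> e / ((c/2)^2 * sqrt (e - s))" using s sq p by (intro frac_le) simp_all
    also have "\<dots> = B * (1 / sqrt (e - s))" by (simp add: B_def)
    also have "\<dots> \<le> B * (1 / sqrt (s - 0) + 1 / sqrt (e - s))"
      using s o e by (intro mult_left_mono) (auto simp: B_def)
    finally show ?thesis .
  qed
  have cont: "continuous_on {0<..<e} (\<lambda>s. s ^ 1 / sqrt (G s))"
  proof -
    have Gp: "G s > 0" if "s \<in> {0<..<e}" for s
    proof -
      have "(c/2)^4 * (e - s) > 0" using o that by simp
      then show ?thesis using low[OF that] by linarith
    qed
    have Gc: "continuous_on {0<..<e} G" unfolding G_def by (intro continuous_intros)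
    have "\<forall>s\<in>{0<..<e}. sqrt (G s) \<noteq> 0" using Gp by force
    then show ?thesis by (intro continuous_intros Gc) auto
  qed
  have i1: "(\<lambda>s. s ^ 1 / sqrt (G s)) integrable_on {0<..<e}"
    using sing_integrable[OF e(1) cont bd] integrable_on_open_interval_real by blast
  have i2: "(\<lambda>s. B * (1 / sqrt (s - 0) + 1 / sqrt (e - s))) integrable_on {0<..<e}"
    using maj_has_integral[OF e(1), of B] integrable_on_open_interval_real by blast
  have "norm (integral {0<..<e} (\<lambda>s. s ^ 1 / sqrt (G s))) \<le> integral {0<..<e} (\<lambda>s. B * (1 / sqrt (s - 0) + 1 / sqrt (e - s)))"
    using i1 i2 bd by (intro integral_norm_bound_integral) auto
  also have "integral {0<..<e} (\<lambda>s. B * (1 / sqrt (s - 0) + 1 / sqrt (e - s))) = B * (4 * sqrt (e - 0))"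
    unfolding integral_open_interval_real[symmetric] using maj_has_integral[OF e(1), of B] by (rule integral_unique)
  finally have "\<bar>integral {0..e} (\<lambda>s. s ^ 1 / sqrt (G s))\<bar> \<le> B * (4 * sqrt e)"
    unfolding integral_open_interval_real[of 0 e] real_norm_def by simp
  then show ?thesis unfolding G_def B_def .
qed




lemma prod3_ge:
  fixes m1 m2 m3 x1 x2 x3 y :: real
  assumes "0 \<le> m1" "m1 \<le> x1" "0 \<le> m2" "m2 \<le> x2" "0 \<le> m3" "m3 \<le> x3" "0 \<le> y"
  shows "m1 * m2 * m3 * y \<le> x1 * x2 * x3 * y"
proof -
  have "m1 * m2 \<le> x1 * x2" using assms by (intro mult_mono) auto
  hence "m1 * m2 * m3 \<le> x1 * x2 * x3" using assms by (intro mult_mono) auto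
  thus ?thesis using assms by (intro mult_right_mono) auto
qed

lemma prod5_le:
  fixes a x1 x2 x3 x4 x5 :: real
  assumes "\<bar>x1\<bar> \<le> a" "\<bar>x2\<bar> \<le> a" "\<bar>x3\<bar> \<le> a" "\<bar>x4\<bar> \<le> a" "\<bar>x5\<bar> \<le> a"
  shows "x1 * x2 * x3 * x4 * x5 \<le> a ^ 5"
proof -
  have "\<bar>x1 * x2\<bar> \<le> a * a" unfolding abs_mult using assms by (intro mult_mono) auto
  hence "\<bar>x1 * x2 * x3\<bar> \<le> a * a * a" unfolding abs_mult using assms by (intro mult_mono) auto
  hence "\<bar>x1 * x2 * x3 * x4\<bar> \<le> a * a * a * a" unfolding abs_mult using assms by (intro mult_mono) auto
  hence "\<bar>x1 * x2 * x3 * x4 * x5\<bar> \<le> a * a * a * a * a" unfolding abs_mult using assms by (intro mult_mono) auto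
  thus ?thesis by (simp add: power_def numeral_eq_Suc mult_ac)
qed

lemma lin2_the:
  fixes x0 x1 p0 p1 q0 q1 :: real
  assumes D: "p0 * q1 - p1 * q0 \<noteq> 0"
  defines "w \<equiv> THE w. (x0, x1) - (2 * fst w) *\<^sub>R (p0, p1) + (2 * snd w) *\<^sub>R (q0, q1) = 0"
  shows "x1 - 2 * fst w * p1 + 2 * snd w * q1 = 0"
proof -
  let ?P = "\<lambda>w::real\<times>real. (x0, x1) - (2 * fst w) *\<^sub>R (p0, p1) + (2 * snd w) *\<^sub>R (q0, q1) = 0"
  have eq: "?P w \<longleftrightarrow> x0 - 2 * fst w * p0 + 2 * snd w * q0 = 0 \<and> x1 - 2 * fst w * p1 + 2 * snd w * q1 = 0" for w
    by (simp add: prod_eq_iff)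
  define u where "u = (x0 * q1 - q0 * x1) / (p0 * q1 - p1 * q0)"
  define v where "v = (p1 * x0 - p0 * x1) / (p0 * q1 - p1 * q0)"
  have ex: "?P (u/2, v/2)" unfolding eq using D by (simp add: u_def v_def field_simps)
  have un: "w1 = w2" if "?P w1" "?P w2" for w1 w2
  proof -
    obtain a1 b1 a2 b2 where w: "w1 = (a1, b1)" "w2 = (a2, b2)" by (cases w1, cases w2)
    have h: "x0 - 2 * a1 * p0 + 2 * b1 * q0 = 0" "x1 - 2 * a1 * p1 + 2 * b1 * q1 = 0"
      "x0 - 2 * a2 * p0 + 2 * b2 * q0 = 0" "x1 - 2 * a2 * p1 + 2 * b2 * q1 = 0"
      using that unfolding eq w by auto
    have e: "(a1 - a2) * p0 = (b1 - b2) * q0" "(a1 - a2) * p1 = (b1 - b2) * q1"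
      using h by algebra+
    have "(a1 - a2) * (p0 * q1 - p1 * q0) = 0"
      using e by algebra
    hence "a1 = a2" using D by simp
    moreover have "(b1 - b2) * (p0 * q1 - p1 * q0) = 0"
      using e by algebra
    hence "b1 = b2" using D by simp
    ultimately show ?thesis using w by simp
  qed
  have "?P w" unfolding w_def by (rule theI[of ?P, OF ex]) (rule un, assumption, rule ex)
  then show ?thesis unfolding eq by simp
qed





theorem lemma2:
  fixes a b c :: real and \<kappa> :: "real \<Rightarrow> real \<times> real"
  assumes abc: "0 < c" "c < b" "b < a"
    and \<kappa>_pos: "\<And>l. l \<in> {c<..<b} \<union> {b<..<a} \<Longrightarrow> fst (\<kappa> l) > 0 \<and> snd (\<kappa> l) > 0"
    and \<kappa>_asym1: "\<And>l. l \<in> {c<..<b} \<union> {b<..<a} \<Longrightarrow>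
       (\<lambda>l1. fst (freq_map a b c l1 l) - fst (\<kappa> l) * l1 powr (1/2)) \<in> O[at_right 0](\<lambda>l1. l1 powr (3/2))"
    and \<kappa>_asym2: "\<And>l. l \<in> {c<..<b} \<union> {b<..<a} \<Longrightarrow>
       (\<lambda>l1. snd (freq_map a b c l1 l) - snd (\<kappa> l) * l1 powr (1/2)) \<in> O[at_right 0](\<lambda>l1. l1 powr (3/2))"
  shows "\<forall>l \<in> {c<..<b} \<union> {b<..<a}.
           rhoG a b c l = snd (\<kappa> l) / fst (\<kappa> l) \<and>
           (\<lambda>l1. snd (freq_map a b c l1 l) / fst (freq_map a b c l1 l) - rhoG a b c l)
              \<in> O[at_right 0](\<lambda>l1. l1)"
proof (intro ballI)
  fix l assume l: "l \<in> {c<..<b} \<union> {b<..<a}"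
  define c3 where "c3 = min b l"
  define c4 where "c4 = max b l"
  have o: "0 < c" "c < c3" "c3 < c4" "c4 < a" using l abc by (auto simp: c3_def c4_def)
  define G where "G e s = (e - s) * (c - s) * (c3 - s) * (c4 - s) * (a - s)" for e s :: real
  have nodes: "freq_nodes a b c x l = [0, x, c, c3, c4, a]" if "0 < x" "x < c" for x
  proof (cases "l < b")
    case True then show ?thesis using that l abc by (simp add: freq_nodes_def c3_def c4_def)
  next
    case False then have "b < l" using l by auto
    then show ?thesis using that l abc by (simp add: freq_nodes_def c3_def c4_def)
  qed
  have Tq: "freq_T a b c x l s = G x s" if "0 < x" "x < c" for x s
    unfolding freq_T_def nodes[OF that] G_def
    by (simp add: numeral_eq_Suc atLeastAtMostSuc_conv mult_ac)
  define P where "P e i = integral {c..c3} (\<lambda>s. s ^ i / sqrt (G e s))" for e :: real and i :: nat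
  define Q where "Q e i = integral {c4..a} (\<lambda>s. s ^ i / sqrt (G e s))" for e :: real and i :: nat
  define A where "A e = integral {0..e} (\<lambda>s. s ^ 1 / sqrt (G e s))" for e
  have Kq: "freq_K a b c x l 0 = (integral {0..x} (\<lambda>s. s ^ 0 / sqrt (G x s)), A x)"
           "freq_K a b c x l 1 = (P x 0, P x 1)" "freq_K a b c x l 2 = (Q x 0, Q x 1)"
    if "0 < x" "x < c" for x
    unfolding freq_K_def Let_def nodes[OF that] P_def Q_def A_def
    by (simp_all add: Tq[OF that])
  have ratio: "G e s = (s - e) / s * G 0 s" if "s > 0" for e s
    using that unfolding G_def by (simp add: field_simps)
  have contG: "continuous_on S (G e)" for e S unfolding G_def by (intro continuous_intros)
  have up: "G e s \<le> a ^ 5" if "0 \<le> e" "e \<le> c/2" "c < s" "s < a" for e s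
    unfolding G_def using that o by (intro prod5_le) auto
  have low1: "((c/2) * (c4 - c3) * (a - c3)) * ((s - c) * (c3 - s)) \<le> G e s"
    if "0 \<le> e" "e \<le> c/2" "s \<in> {c<..<c3}" for e s
  proof -
    have "G e s = (s - e) * (c4 - s) * (a - s) * ((s - c) * (c3 - s))" unfolding G_def by (simp add: algebra_simps)
    moreover have "(c/2) * (c4 - c3) * (a - c3) * ((s - c) * (c3 - s)) \<le> (s - e) * (c4 - s) * (a - s) * ((s - c) * (c3 - s))"
      using that o by (intro prod3_ge) auto
    ultimately show ?thesis by simp
  qed
  have low2: "((c/2) * (c4 - c) * (c4 - c3)) * ((s - c4) * (a - s)) \<le> G e s"
    if "0 \<le> e" "e \<le> c/2" "s \<in> {c4<..<a}" for e s
  proof -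
    have "G e s = (s - e) * (s - c) * (s - c3) * ((s - c4) * (a - s))" unfolding G_def by (simp add: algebra_simps)
    moreover have "(c/2) * (c4 - c) * (c4 - c3) * ((s - c4) * (a - s)) \<le> (s - e) * (s - c) * (s - c3) * ((s - c4) * (a - s))"
      using that o by (intro prod3_ge) auto
    ultimately show ?thesis by simp
  qed
  have k1: "(c/2) * (c4 - c3) * (a - c3) > 0" and k2: "(c/2) * (c4 - c) * (c4 - c3) > 0" using o by auto
  have M: "a ^ 5 > 0" using o by simp
  have up1: "G e s \<le> a ^ 5" if "0 \<le> e" "e \<le> c/2" "s \<in> {c<..<c3}" for e s using up that o by auto
  have up2: "G e s \<le> a ^ 5" if "0 \<le> e" "e \<le> c/2" "s \<in> {c4<..<a}" for e s using up that o by auto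
  have E1: "c / 2 \<le> c / 2" by simp
  have E2: "c / 2 \<le> c4 / 2" using o by simp
  have P0: "P e 0 > 0" "c * P e 0 \<le> P e 1" "P e 1 \<le> c3 * P e 0"
     "\<bar>P e i - P 0 i\<bar> \<le> e * (1 / (sqrt c * sqrt (c / 2))) * P 0 i" if "0 \<le> e" "e \<le> c / 2" for e i
    unfolding P_def
    by (rule interval_facts[of c c3 "c/2" "(c/2) * (c4 - c3) * (a - c3)" "a^5" G];
        (fact o k1 M low1 up1 ratio contG that E1)?)+
  have Q0: "Q e 0 > 0" "c4 * Q e 0 \<le> Q e 1" "Q e 1 \<le> a * Q e 0"
     "\<bar>Q e i - Q 0 i\<bar> \<le> e * (1 / (sqrt c4 * sqrt (c4 / 2))) * Q 0 i" if "0 \<le> e" "e \<le> c / 2" for e i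
    unfolding Q_def
    by (rule interval_facts[of c4 a "c/2" "(c/2) * (c4 - c) * (c4 - c3)" "a^5" G];
        (fact o k2 M low2 up2 ratio contG that E2)?; (use o in linarith)?)+
  define w1 where "w1 x = fst (freq_map a b c x l)" for x
  define w2 where "w2 x = snd (freq_map a b c x l)" for x
  have eqn: "A x = 2 * w1 x * P x 1 - 2 * w2 x * Q x 1" if x: "0 < x" "x \<le> c / 2" for x
  proof -
    have xc: "x < c" using x o by simp
    have x0: "0 \<le> x" using x by simp
    have "P x 1 * Q x 0 \<le> (c3 * P x 0) * Q x 0" using P0(3)[OF x0 x(2)] Q0(1)[OF x0 x(2)] by (intro mult_right_mono) auto
    moreover have "P x 0 * (c4 * Q x 0) \<le> P x 0 * Q x 1" using P0(1)[OF x0 x(2)] Q0(2)[OF x0 x(2)] by (intro mult_left_mono) auto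
    moreover have "(c3 * P x 0) * Q x 0 < P x 0 * (c4 * Q x 0)"
      using P0(1)[OF x0 x(2)] Q0(1)[OF x0 x(2)] o by simp
    ultimately have D: "P x 0 * Q x 1 - P x 1 * Q x 0 \<noteq> 0" by linarith
    have fm: "freq_map a b c x l = (THE w. (integral {0..x} (\<lambda>s. s ^ 0 / sqrt (G x s)), A x)
               - (2 * fst w) *\<^sub>R (P x 0, P x 1) + (2 * snd w) *\<^sub>R (Q x 0, Q x 1) = 0)"
      unfolding freq_map_def Kq[OF x(1) xc] ..
    have "A x - 2 * fst (freq_map a b c x l) * P x 1 + 2 * snd (freq_map a b c x l) * Q x 1 = 0"
      unfolding fm by (rule lin2_the[OF D])
    then show ?thesis unfolding w1_def w2_def by simp
  qed
  have Abd: "\<bar>A x\<bar> \<le> (x / (c/2)^2) * (4 * sqrt x)" if "0 < x" "x \<le> c / 2" for x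
    using K01_bound[OF o that] unfolding A_def G_def .
  define k1 where "k1 = fst (\<kappa> l)"
  define k2 where "k2 = snd (\<kappa> l)"
  have kp: "k1 > 0" "k2 > 0" using \<kappa>_pos[OF l] by (auto simp: k1_def k2_def)
  have p32: "x powr (3/2) = x * sqrt x" if "0 < x" for x :: real
  proof -
    have "x powr (3/2) = x powr (1 + 1/2)" by simp
    also have "\<dots> = x powr 1 * x powr (1/2)" by (rule powr_add)
    finally show ?thesis using that by (simp add: powr_half_sqrt)
  qed
  obtain C1 where C1: "C1 > 0" "eventually (\<lambda>x. norm (w1 x - k1 * x powr (1/2)) \<le> C1 * norm (x powr (3/2))) (at_right 0)"
    using \<kappa>_asym1[OF l] unfolding w1_def[symmetric] k1_def[symmetric] by (elim landau_o.bigE) auto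
  obtain C2 where C2: "C2 > 0" "eventually (\<lambda>x. norm (w2 x - k2 * x powr (1/2)) \<le> C2 * norm (x powr (3/2))) (at_right 0)"
    using \<kappa>_asym2[OF l] unfolding w2_def[symmetric] k2_def[symmetric] by (elim landau_o.bigE) auto
  obtain d1 where d1: "d1 > 0" "\<And>x. 0 < x \<Longrightarrow> x < d1 \<Longrightarrow> norm (w1 x - k1 * x powr (1/2)) \<le> C1 * norm (x powr (3/2))"
    using C1(2) unfolding eventually_at_right_field by auto
  obtain d2 where d2: "d2 > 0" "\<And>x. 0 < x \<Longrightarrow> x < d2 \<Longrightarrow> norm (w2 x - k2 * x powr (1/2)) \<le> C2 * norm (x powr (3/2))"
    using C2(2) unfolding eventually_at_right_field by auto
  define d where "d = min (min d1 d2) (min (c/2) (k1 / (2 * C1)))"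
  have dp: "d > 0" using d1 d2 o kp C1 by (simp add: d_def)
  define r1 where "r1 x = (w1 x - k1 * sqrt x) / sqrt x" for x
  define r2 where "r2 x = (w2 x - k2 * sqrt x) / sqrt x" for x
  have loc: "\<bar>r1 x\<bar> \<le> C1 * x" "\<bar>r2 x\<bar> \<le> C2 * x" "w1 x = sqrt x * (k1 + r1 x)" "w2 x = sqrt x * (k2 + r2 x)"
    "x \<le> c / 2" "\<bar>r1 x\<bar> \<le> k1 / 2"
    if x: "0 < x" "x < d" for x
  proof -
    have sx: "sqrt x > 0" using x by simp
    have a1: "\<bar>w1 x - k1 * sqrt x\<bar> \<le> C1 * (x * sqrt x)"
      using d1(2)[of x] x p32[OF x(1)] by (simp add: d_def powr_half_sqrt)
    have a2: "\<bar>w2 x - k2 * sqrt x\<bar> \<le> C2 * (x * sqrt x)"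
      using d2(2)[of x] x p32[OF x(1)] by (simp add: d_def powr_half_sqrt)
    have "\<bar>r1 x\<bar> = \<bar>w1 x - k1 * sqrt x\<bar> / sqrt x" using sx by (simp add: r1_def abs_divide)
    also have "\<dots> \<le> C1 * (x * sqrt x) / sqrt x" using a1 sx by (intro divide_right_mono) auto
    also have "\<dots> = C1 * x" using sx by simp
    finally show r1b: "\<bar>r1 x\<bar> \<le> C1 * x" .
    have "\<bar>r2 x\<bar> = \<bar>w2 x - k2 * sqrt x\<bar> / sqrt x" using sx by (simp add: r2_def abs_divide)
    also have "\<dots> \<le> C2 * (x * sqrt x) / sqrt x" using a2 sx by (intro divide_right_mono) auto
    also have "\<dots> = C2 * x" using sx by simp
    finally show "\<bar>r2 x\<bar> \<le> C2 * x" .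
    show "w1 x = sqrt x * (k1 + r1 x)" using sx by (simp add: r1_def field_simps)
    show "w2 x = sqrt x * (k2 + r2 x)" using sx by (simp add: r2_def field_simps)
    show "x \<le> c / 2" using x by (simp add: d_def)
    have "x \<le> k1 / (2 * C1)" using x by (simp add: d_def)
    hence "C1 * x \<le> k1 / 2" using C1(1) by (simp add: field_simps)
    then show "\<bar>r1 x\<bar> \<le> k1 / 2" using r1b by linarith
  qed
  have ev: "eventually (\<lambda>x. 0 < x \<and> x < d) (at_right 0)"
    unfolding eventually_at_right_field using dp by auto
  have lim0: "((\<lambda>x. C * x) \<longlongrightarrow> 0) (at_right 0)" for C :: real
  proof -
    have "((\<lambda>x. C * x) \<longlongrightarrow> C * 0) (at_right 0)" by (intro tendsto_intros)
    then show ?thesis by simp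
  qed
  have r1l: "(r1 \<longlongrightarrow> 0) (at_right 0)"
    by (rule Lim_null_comparison[OF eventually_mono[OF ev] lim0[of C1]]) (use loc in auto)
  have r2l: "(r2 \<longlongrightarrow> 0) (at_right 0)"
    by (rule Lim_null_comparison[OF eventually_mono[OF ev] lim0[of C2]]) (use loc in auto)
  have Pl: "((\<lambda>x. P x 1) \<longlongrightarrow> P 0 1) (at_right 0)"
  proof -
    have "((\<lambda>x. P x 1 - P 0 1) \<longlongrightarrow> 0) (at_right 0)"
      by (rule Lim_null_comparison[OF eventually_mono[OF ev] lim0[of "(1 / (sqrt c * sqrt (c / 2))) * P 0 1"]])
         (use loc P0(4) in \<open>auto simp: mult_ac\<close>)
    from tendsto_add[OF this tendsto_const[of "P 0 1"]] show ?thesis by simp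
  qed
  have Ql: "((\<lambda>x. Q x 1) \<longlongrightarrow> Q 0 1) (at_right 0)"
  proof -
    have "((\<lambda>x. Q x 1 - Q 0 1) \<longlongrightarrow> 0) (at_right 0)"
      by (rule Lim_null_comparison[OF eventually_mono[OF ev] lim0[of "(1 / (sqrt c4 * sqrt (c4 / 2))) * Q 0 1"]])
         (use loc Q0(4) in \<open>auto simp: mult_ac\<close>)
    from tendsto_add[OF this tendsto_const[of "Q 0 1"]] show ?thesis by simp
  qed
  define F where "F x = 2 * (k1 + r1 x) * P x 1 - 2 * (k2 + r2 x) * Q x 1" for x
  have Fl: "(F \<longlongrightarrow> 2 * (k1 + 0) * P 0 1 - 2 * (k2 + 0) * Q 0 1) (at_right 0)"
    unfolding F_def by (intro tendsto_intros r1l r2l Pl Ql)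
  have Al: "((\<lambda>x. A x / sqrt x) \<longlongrightarrow> 0) (at_right 0)"
  proof (rule Lim_null_comparison[OF eventually_mono[OF ev] lim0[of "4 / (c/2)^2"]])
    fix x assume x: "0 < x \<and> x < d"
    have sx: "sqrt x > 0" using x by simp
    have "\<bar>A x / sqrt x\<bar> = \<bar>A x\<bar> / sqrt x" using sx by (simp add: abs_divide)
    also have "\<dots> \<le> ((x / (c/2)^2) * (4 * sqrt x)) / sqrt x"
      using Abd[of x] x loc(5)[of x] sx by (intro divide_right_mono) auto
    also have "\<dots> = 4 / (c/2)^2 * x" using sx by (simp add: field_simps)
    finally show "norm (A x / sqrt x) \<le> 4 / (c/2)^2 * x" by simp
  qed
  have "eventually (\<lambda>x. A x / sqrt x = F x) (at_right 0)"
  proof (rule eventually_mono[OF ev])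
    fix x assume x: "0 < x \<and> x < d"
    have sx: "sqrt x > 0" using x by simp
    have "A x = sqrt x * F x"
      using eqn[of x] loc(3,4,5)[of x] x unfolding F_def by (simp add: algebra_simps)
    then show "A x / sqrt x = F x" using sx by simp
  qed
  with Al have "(F \<longlongrightarrow> 0) (at_right 0)" by (rule Lim_transform_eventually)
  from tendsto_unique[OF trivial_limit_at_right_real Fl this]
  have key: "k1 * P 0 1 = k2 * Q 0 1" by simp
  have Q01: "Q 0 1 > 0"
  proof -
    have "c4 * Q 0 0 > 0" using Q0(1)[of 0] o by simp
    then show ?thesis using Q0(2)[of 0] o by linarith
  qed
  have TG_eq: "TG a b c l s = G 0 s" for s
  proof (cases "l < b")
    case True then show ?thesis unfolding TG_def G_def c3_def c4_def by (simp add: algebra_simps)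
  next
    case False then show ?thesis unfolding TG_def G_def c3_def c4_def by (simp add: algebra_simps)
  qed
  have rho: "rhoG a b c l = P 0 1 / Q 0 1"
    unfolding rhoG_def P_def Q_def TG_eq c3_def c4_def by simp
  have rho2: "rhoG a b c l = k2 / k1" unfolding rho using key Q01 kp by (simp add: field_simps)
  have big: "(\<lambda>x. w2 x / w1 x - k2 / k1) \<in> O[at_right 0](\<lambda>x. x)"
  proof (rule landau_o.bigI[of "(k1 * C2 + k2 * C1) / (k1 * (k1 / 2))"])
    show "(k1 * C2 + k2 * C1) / (k1 * (k1 / 2)) > 0" using kp C1(1) C2(1) by (intro divide_pos_pos add_pos_pos mult_pos_pos) auto
    show "eventually (\<lambda>x. norm (w2 x / w1 x - k2 / k1) \<le> (k1 * C2 + k2 * C1) / (k1 * (k1 / 2)) * norm x) (at_right 0)"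
    proof (rule eventually_mono[OF ev])
      fix x assume x: "0 < x \<and> x < d"
      have sx: "sqrt x > 0" using x by simp
      note L = loc[of x, OF conjunct1[OF x] conjunct2[OF x]]
      have den: "k1 + r1 x \<ge> k1 / 2" using L(6) by linarith
      have den2: "k1 * (k1 + r1 x) \<ge> k1 * (k1 / 2)" using den kp by (intro mult_left_mono) auto
      have dpos: "k1 * (k1 / 2) > 0" using kp by simp
      have nz: "k1 + r1 x > 0" using den kp by linarith
      have q: "w2 x / w1 x = (k2 + r2 x) / (k1 + r1 x)" unfolding L(3,4) using sx by simp
      have "w2 x / w1 x - k2 / k1 = (k1 * r2 x - k2 * r1 x) / (k1 * (k1 + r1 x))"
        unfolding q using nz kp by (simp add: field_simps)
      hence "\<bar>w2 x / w1 x - k2 / k1\<bar> = \<bar>k1 * r2 x - k2 * r1 x\<bar> / (k1 * (k1 + r1 x))"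
        using den2 dpos by (simp add: abs_divide)
      also have "\<dots> \<le> (k1 * (C2 * x) + k2 * (C1 * x)) / (k1 * (k1 / 2))"
      proof (rule frac_le)
        have "\<bar>k1 * r2 x - k2 * r1 x\<bar> \<le> k1 * \<bar>r2 x\<bar> + k2 * \<bar>r1 x\<bar>"
          using abs_triangle_ineq4[of "k1 * r2 x" "k2 * r1 x"] kp by (simp add: abs_mult)
        also have "\<dots> \<le> k1 * (C2 * x) + k2 * (C1 * x)"
          using L(1,2) kp by (intro add_mono mult_left_mono) auto
        finally show "\<bar>k1 * r2 x - k2 * r1 x\<bar> \<le> k1 * (C2 * x) + k2 * (C1 * x)" .
        show "0 \<le> k1 * (C2 * x) + k2 * (C1 * x)" using kp C1 C2 x by simp
      qed (use dpos den2 in auto)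
      also have "\<dots> = (k1 * C2 + k2 * C1) / (k1 * (k1 / 2)) * norm x" using x by (simp add: field_simps)
      finally show "norm (w2 x / w1 x - k2 / k1) \<le> (k1 * C2 + k2 * C1) / (k1 * (k1 / 2)) * norm x" by simp
    qed
  qed
  show "rhoG a b c l = snd (\<kappa> l) / fst (\<kappa> l) \<and>
           (\<lambda>l1. snd (freq_map a b c l1 l) / fst (freq_map a b c l1 l) - rhoG a b c l)
              \<in> O[at_right 0](\<lambda>l1. l1)"
    using rho2 big unfolding k1_def k2_def w1_def w2_def by simp
qed

end
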